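(* Suppose Assumptions (A1) and (A2) hold. For every nonempty $\mathscr{S}\in\mathcal{A}(k)$ there exists a constant $C(\mathscr{S})$ such that, whenever $C>C(\mathscr{S})$, $$\inf_{T\in\mathcal{T}^{1/2}_{\mathscr{S}}}\sup_{\tau\in\mathrm{Lip}_C(\mathbb{R}^d)}\mathcal{R}(T,\mathscr{S},\tau)\le \frac{B}{\#\mathcal{S}_P}\sum_{s\in\mathscr{S}\cap\mathcal{S}_P}\sigma_s+\frac{C}{2}\,\frac{1}{\#\mathcal{S}_P}\sum_{s\in\mathcal{S}_P\setminus\mathscr{S}}\|X_s-X_{N_{\mathscr{S}}(s)}\|.$$
   Context: Sites are indexed by $\mathcal{S}=\{1,\dots,S\}$. $\mathcal{S}_E\subseteq\mathcal{S}$ (experimental sites) has $\mathrm{card}(\mathcal{S}_E)\ge 2$, and $\mathcal{S}_P\subseteq\mathcal{S}$ (policy sites) is nonempty, with $\#\mathcal{S}_P=\mathrm{card}(\mathcal{S}_P)$. Each site $s$ has a covariate vector $X_s\in\mathbb{R}^d$ and a known standard deviation $\sigma_s>0$. $\|\cdot\|$ is the Euclidean norm, and $\mathrm{Lip}_C(\mathbb{R}^d)$ is the set of functions $\tau:\mathbb{R}^d\to\mathbb{R}$ with $|\tau(x)-\tau(x')|\le C\|x-x'\|$ for all $x,x'$, where $C>0$. (A1): the true conditional treatment effect function $\tau$ lies in $\mathrm{Lip}_C(\mathbb{R}^d)$. (A2): $X_s\neq X_{s'}$ for all $s\neq s'$ in $\mathcal{S}$. Fix an integer $1\le k<\mathrm{card}(\mathcal{S}_E)$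 and set $\mathcal{A}(k)=\{\mathscr{S}\subset\mathcal{S}_E:\mathrm{card}(\mathscr{S})\le k\}$. For a nonempty $\mathscr{S}$ with elements $\mathscr{S}_1<\dots<\mathscr{S}_m$, the data are $\hat\tau_{\mathscr{S}}\sim\mathcal{N}_m(\tau_{\mathscr{S}},\Sigma_{\mathscr{S}})$, where $\tau_{\mathscr{S}}=(\tau(X_{\mathscr{S}_1}),\dots,\tau(X_{\mathscr{S}_m}))^\top$ and $\Sigma_{\mathscr{S}}=\mathrm{diag}(\sigma^2_{\mathscr{S}_1},\dots,\sigma^2_{\mathscr{S}_m})$. A treatment rule is a measurable map $T:\mathbb{R}^m\to[0,1]^{\#\mathcal{S}_P}$ with components $T_s$, $s\in\mathcal{S}_P$. $\mathcal{T}^{1/2}_{\mathscr{S}}$ is the set of treatment rules with $\mathbb{E}[T_s(U)]=1/2$ for all $s\in\mathcal{S}_P$ whenever $U\sim\mathcal{N}_m(0,\Sigma)$, for every positive definite diagonal $\Sigma$. Regret is $\mathcal{R}(T,\mathscr{S},\tau)=\frac{1}{\#\mathcal{S}_P}\sum_{s\in\mathcal{S}_P}\tau(X_s)\big(\mathbf{1}\{\tau(X_s)\ge0\}-\mathbb{E}_{\tau_{\mathscr{S}}}[T_s(\hat\tau_{\mathscr{S}})]\big)$. $N_{\mathscr{S}}(s)$ is the nearest neighbor of $s$ in $\mathscr{S}$ in Euclidean distance of covariates, with the smallest index chosen under ties. $B=\arg\max_{z\ge0}z\,\Phi(-z)$, where $\Phi$ is the standard normal CDF. *)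

theory Defs
  imports "HOL-Probability.Probability"
begin

definition Lip :: "real \<Rightarrow> ('a::euclidean_space \<Rightarrow> real) set" where
  "Lip C = {\<tau>. \<forall>x x'. \<bar>\<tau> x - \<tau> x'\<bar> \<le> C * norm (x - x')}"

definition Phi :: "real \<Rightarrow> real" where
  "Phi z = measure (density lborel std_normal_density) {..z}"

definition B_const :: real where
  "B_const = (THE z. z \<ge> 0 \<and> (\<forall>y\<ge>0. y * Phi (- y) \<le> z * Phi (- z)))"

definition nn :: "(nat \<Rightarrow> 'a::euclidean_space) \<Rightarrow> nat set \<Rightarrow> nat \<Rightarrow> nat" where
  "nn X Sc s = (LEAST j. j \<in> Sc \<and> (\<forall>i\<in>Sc. norm (X s - X j) \<le> norm (X s - X i)))"

definition gauss_vec :: "nat set \<Rightarrow> (nat \<Rightarrow> real) \<Rightarrow> (nat \<Rightarrow> real) \<Rightarrow> (nat \<Rightarrow> real) measure" where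
  "gauss_vec Sc mu sd = PiM Sc (\<lambda>s. density lborel (normal_density (mu s) (sd s)))"

definition half_rules :: "nat set \<Rightarrow> nat set \<Rightarrow> ((nat \<Rightarrow> real) \<Rightarrow> nat \<Rightarrow> real) set" where
  "half_rules SP Sc = {T.
     (\<forall>s\<in>SP. (\<lambda>u. T u s) \<in> borel_measurable (PiM Sc (\<lambda>_. borel))) \<and>
     (\<forall>s\<in>SP. \<forall>u. 0 \<le> T u s \<and> T u s \<le> 1) \<and>
     (\<forall>sd. (\<forall>i\<in>Sc. sd i > 0) \<longrightarrow>
        (\<forall>s\<in>SP. (\<integral>u. T u s \<partial>(gauss_vec Sc (\<lambda>_. 0) sd)) = 1/2))}"

definition regret :: "nat set \<Rightarrow> (nat \<Rightarrow> 'a::euclidean_space) \<Rightarrow> (nat \<Rightarrow> real)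
     \<Rightarrow> ((nat \<Rightarrow> real) \<Rightarrow> nat \<Rightarrow> real) \<Rightarrow> nat set \<Rightarrow> ('a \<Rightarrow> real) \<Rightarrow> real" where
  "regret SP X \<sigma> T Sc \<tau> = (1 / real (card SP)) *
     (\<Sum>s\<in>SP. \<tau> (X s) * ((if \<tau> (X s) \<ge> 0 then 1 else 0)
        - (\<integral>u. T u s \<partial>(gauss_vec Sc (\<lambda>i. \<tau> (X i)) \<sigma>))))"

end

theory Submission
  imports Defs "HOL-Real_Asymp.Real_Asymp"
begin

abbreviation NM :: "real \<Rightarrow> real \<Rightarrow> real measure" where
  "NM \<mu> \<sigma> \<equiv> density lborel (\<lambda>x. ennreal (normal_density \<mu> \<sigma> x))"

lemma NM_prob: "0 < \<sigma> \<Longrightarrow> prob_space (NM \<mu> \<sigma>)"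
  by (rule prob_space_normal_density)

lemma sets_NM[measurable_cong, simp]: "sets (NM \<mu> \<sigma>) = sets borel"
  by simp

lemma space_NM[simp]: "space (NM \<mu> \<sigma>) = UNIV"
  by simp

lemma NM_distributed_id: "distributed (NM \<mu> \<sigma>) lborel (\<lambda>x. x) (normal_density \<mu> \<sigma>)"
  unfolding distributed_def
  by (auto simp: distr_id2 intro!: measurable_ident_sets)

lemma NM_affine:
  assumes "0 < \<sigma>" "\<alpha> \<noteq> 0"
  shows "distr (NM \<mu> \<sigma>) lborel (\<lambda>x. \<beta> + \<alpha> * x) = NM (\<beta> + \<alpha> * \<mu>) (\<bar>\<alpha>\<bar> * \<sigma>)"
proof -
  interpret prob_space "NM \<mu> \<sigma>" using NM_prob[OF assms(1)] .
  have "distributed (NM \<mu> \<sigma>) lborel (\<lambda>x. \<beta> + \<alpha> * x) (normal_density (\<beta> + \<alpha> * \<mu>) (\<bar>\<alpha>\<bar> * \<sigma>))"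
    by (rule normal_density_affine[OF NM_distributed_id assms])
  then show ?thesis by (rule distributed_distr_eq_density)
qed

lemma NM_std: "0 < \<sigma> \<Longrightarrow> NM \<mu> \<sigma> = distr (NM 0 1) lborel (\<lambda>x. \<mu> + \<sigma> * x)"
  using NM_affine[of 1 \<sigma> 0 \<mu>] by simp

lemma NM_neg: "distr (NM 0 1) lborel (\<lambda>x. - x) = NM 0 1"
  using NM_affine[of 1 "-1" 0 0] by simp

interpretation std: real_distribution "NM 0 1"
  by (rule real_dist_normal_dist)

lemma Phi_cdf: "Phi = cdf (NM 0 1)"
  by (auto simp: Phi_def cdf_def2)

lemma NM_singleton: "measure (NM \<mu> \<sigma>) {x} = 0"
proof -
  have "{x} \<in> null_sets (NM \<mu> \<sigma>)"
  proof (subst null_sets_density_iff)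
    show "{x} \<in> sets lborel \<and> (AE y\<in>{x} in lborel. ennreal (normal_density \<mu> \<sigma> y) = 0)"
    proof
      show "AE y\<in>{x} in lborel. ennreal (normal_density \<mu> \<sigma> y) = 0"
        using AE_lborel_singleton[of x] by (rule eventually_mono) auto
    qed auto
  qed auto
  then show ?thesis by (simp add: measure_def null_setsD1)
qed

lemma Phi_neg: "Phi (- x) = 1 - Phi x"
proof -
  have "Phi (-x) = measure (distr (NM 0 1) lborel (\<lambda>x. - x)) {..-x}"
    by (simp add: NM_neg Phi_def)
  also have "\<dots> = measure (NM 0 1) {x..}"
    by (subst measure_distr) (auto intro!: arg_cong2[where f=measure])
  also have "\<dots> = 1 - measure (NM 0 1) {..<x}"
    using std.prob_compl[of "{..<x}"] by (auto simp: Compl_eq_Diff_UNIV[symmetric] simp flip: Compl_eq)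
  also have "measure (NM 0 1) {..<x} = Phi x"
  proof -
    have "measure (NM 0 1) {..x} = measure (NM 0 1) ({..<x} \<union> {x})"
      by (auto intro!: arg_cong2[where f=measure])
    also have "\<dots> = measure (NM 0 1) {..<x} + measure (NM 0 1) {x}"
      by (intro std.finite_measure_Union) auto
    finally show ?thesis by (simp add: NM_singleton Phi_def)
  qed
  finally show ?thesis .
qed

lemma Phi_0: "Phi 0 = 1/2"
  using Phi_neg[of 0] by simp

lemma Phi_NM: "0 < \<sigma> \<Longrightarrow> measure (NM \<mu> \<sigma>) {..t} = Phi ((t - \<mu>) / \<sigma>)"
  apply (subst NM_std, assumption)
  apply (subst measure_distr)
  apply (auto simp: Phi_def intro!: arg_cong2[where f=measure])
  apply (auto simp: field_simps)
  done

lemma Phi_nonneg: "0 \<le> Phi x" and Phi_le1: "Phi x \<le> 1"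
  by (auto simp: Phi_cdf std.cdf_nonneg std.cdf_bounded_prob)

lemma Phi_mono: "x \<le> y \<Longrightarrow> Phi x \<le> Phi y"
  by (auto simp: Phi_cdf std.cdf_nondecreasing)

lemma Phi_top: "(Phi \<longlongrightarrow> 1) at_top"
  by (simp add: Phi_cdf std.cdf_lim_at_top_prob)

lemma Phi_less: "measure (NM 0 1) {..<x} = Phi x"
proof -
  have "measure (NM 0 1) {..x} = measure (NM 0 1) ({..<x} \<union> {x})"
    by (auto intro!: arg_cong2[where f=measure])
  also have "\<dots> = measure (NM 0 1) {..<x} + measure (NM 0 1) {x}"
    by (intro std.finite_measure_Union) auto
  finally show ?thesis by (simp add: NM_singleton Phi_def)
qed

lemma measure_NM_set_integral:
  assumes [measurable]: "A \<in> sets borel" and pos: "0 < \<sigma>"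
  shows "measure (NM \<mu> \<sigma>) A = (LINT y:A|lborel. normal_density \<mu> \<sigma> y)"
proof -
  have int: "integrable lborel (\<lambda>y. normal_density \<mu> \<sigma> y * indicator A y)"
    by (rule integrable_real_mult_indicator) (auto intro: integrable_normal_density[OF pos])
  have "emeasure (NM \<mu> \<sigma>) A = (\<integral>\<^sup>+y. ennreal (normal_density \<mu> \<sigma> y * indicator A y) \<partial>lborel)"
    by (subst emeasure_density) (auto intro!: nn_integral_cong simp: indicator_def)
  also have "\<dots> = ennreal (\<integral>y. normal_density \<mu> \<sigma> y * indicator A y \<partial>lborel)"
    by (rule nn_integral_eq_integral[OF int]) auto
  finally show ?thesis
    by (simp add: measure_def set_lebesgue_integral_def mult.commute)
qed

lemma Phi_LBINT: "Phi x = (LBINT y=-\<infinity>..ereal x. std_normal_density y)"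
  by (simp add: Phi_less[symmetric] measure_NM_set_integral interval_lebesgue_integral_def)

lemma Phi_split: "Phi x = (LBINT y=-\<infinity>..ereal c. std_normal_density y) + (LBINT y=ereal c..ereal x. std_normal_density y)"
  unfolding Phi_LBINT
  by (rule interval_integral_sum[symmetric])
     (auto simp: interval_lebesgue_integrable_def set_integrable_def
        mult.commute[of "indicator _ _"] intro!: integrable_real_mult_indicator)

lemma cont_snd: "continuous_on S std_normal_density"
  unfolding normal_density_def by (intro continuous_intros) auto

lemma Phi_deriv: "(Phi has_real_derivative std_normal_density x) (at x)"
proof -
  let ?c = "x - 1"
  have "((\<lambda>u. LBINT y=?c..u. std_normal_density y) has_vector_derivative std_normal_density x) (at x within {x-1..x+1})"
    by (rule interval_integral_FTC2) (auto intro: cont_snd)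
  then have "((\<lambda>u. LBINT y=?c..u. std_normal_density y) has_vector_derivative std_normal_density x) (at x within {x-1<..<x+1})"
    by (rule has_vector_derivative_within_subset) auto
  then have "((\<lambda>u. LBINT y=?c..u. std_normal_density y) has_vector_derivative std_normal_density x) (at x)"
    by (subst (asm) has_vector_derivative_within_open) auto
  then have "((\<lambda>u. (LBINT y=-\<infinity>..ereal ?c. std_normal_density y) + (LBINT y=?c..u. std_normal_density y)) has_vector_derivative std_normal_density x) (at x)"
    by (auto intro!: derivative_eq_intros)
  then have "(Phi has_vector_derivative std_normal_density x) (at x)"
    by (subst (asm) Phi_split[of _ ?c, symmetric])
  then show ?thesis by (simp add: has_real_derivative_iff_has_vector_derivative)
qed

definition sq2pi :: real where "sq2pi = sqrt (2 * pi)"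

lemma sq2pi_pos: "0 < sq2pi" by (simp add: sq2pi_def)

lemma snd_eq: "std_normal_density x = exp (- (x * x) / 2) / sq2pi"
  by (simp add: std_normal_density_def sq2pi_def power2_eq_square)

lemma snd_le: "std_normal_density x \<le> 1 / sq2pi"
  unfolding snd_eq using sq2pi_pos by (auto simp: divide_right_mono)

lemma snd_pos: "0 < std_normal_density x"
  unfolding snd_eq using sq2pi_pos by auto

lemma snd_even: "std_normal_density (- x) = std_normal_density x"
  unfolding snd_eq by simp

lemma snd_deriv: "(std_normal_density has_real_derivative (- x * std_normal_density x)) (at x)"
  unfolding snd_eq[abs_def] using sq2pi_pos
  by (auto intro!: derivative_eq_intros simp: field_simps)

lemma Phi_cont: "continuous_on S Phi"
  by (intro continuous_at_imp_continuous_on ballI DERIV_isCont[OF Phi_deriv])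

lemma Phi_upper:
  assumes "0 \<le> x" shows "Phi x \<le> 1/2 + x / sq2pi"
proof -
  have "(\<lambda>y. 1/2 + y / sq2pi - Phi y) 0 \<le> (\<lambda>y. 1/2 + y / sq2pi - Phi y) x"
  proof (rule DERIV_nonneg_imp_nondecreasing[OF assms])
    fix y
    show "\<exists>d. ((\<lambda>y. 1/2 + y / sq2pi - Phi y) has_real_derivative d) (at y) \<and> 0 \<le> d"
      using snd_le[of y] sq2pi_pos
      by (intro exI[of _ "1 / sq2pi - std_normal_density y"]) (auto intro!: derivative_eq_intros Phi_deriv)
  qed
  then show ?thesis by (simp add: Phi_0)
qed

definition kf :: "real \<Rightarrow> real" where
  "kf y = 2 * ln (sq2pi + 2 * y) - 2 * ln sq2pi - y * y / 2"

lemma kf_deriv: "0 \<le> y \<Longrightarrow> (kf has_real_derivative (4 / (sq2pi + 2 * y) - y)) (at y)"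
  unfolding kf_def[abs_def] using sq2pi_pos
  by (auto intro!: derivative_eq_intros simp: field_simps)

lemma kf_0: "kf 0 = 0" by (simp add: kf_def)

lemma kf'_decr: "0 \<le> u \<Longrightarrow> u < v \<Longrightarrow> 4 / (sq2pi + 2 * v) - v < 4 / (sq2pi + 2 * u) - u"
proof -
  assume "0 \<le> u" "u < v"
  then have "4 / (sq2pi + 2 * v) \<le> 4 / (sq2pi + 2 * u)"
    using sq2pi_pos by (intro divide_left_mono) auto
  with \<open>u < v\<close> show ?thesis by linarith
qed

lemma kf_mono:
  assumes "0 < y" "y < x" "kf y < 0"
  shows "kf x < kf y"
proof -
  obtain z1 where z1: "0 < z1" "z1 < y" "kf y - kf 0 = (y - 0) * (4 / (sq2pi + 2 * z1) - z1)"
    using MVT2[of 0 y kf "\<lambda>y. 4 / (sq2pi + 2 * y) - y"] assms kf_deriv by auto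
  obtain z2 where z2: "y < z2" "z2 < x" "kf x - kf y = (x - y) * (4 / (sq2pi + 2 * z2) - z2)"
    using MVT2[of y x kf "\<lambda>y. 4 / (sq2pi + 2 * y) - y"] assms kf_deriv by auto
  have "4 / (sq2pi + 2 * z1) - z1 < 0"
    using z1 assms kf_0 by (simp add: mult_less_0_iff)
  moreover have "4 / (sq2pi + 2 * z2) - z2 < 4 / (sq2pi + 2 * z1) - z1"
    using z1 z2 by (intro kf'_decr) auto
  ultimately have "4 / (sq2pi + 2 * z2) - z2 < 0" by linarith
  then have "(x - y) * (4 / (sq2pi + 2 * z2) - z2) < 0"
    using z2 by (intro mult_pos_neg) auto
  with z2 show ?thesis by linarith
qed

definition hf :: "real \<Rightarrow> real" where
  "hf y = Phi y - 1/2 - y / (sq2pi + 2 * y)"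

lemma hf_deriv: "0 \<le> y \<Longrightarrow> (hf has_real_derivative (std_normal_density y - sq2pi / (sq2pi + 2 * y)^2)) (at y)"
  unfolding hf_def[abs_def] using sq2pi_pos
  by (auto intro!: derivative_eq_intros Phi_deriv simp: field_simps power2_eq_square)

lemma kf_hf_pos:
  assumes "0 \<le> y" "0 \<le> kf y"
  shows "0 \<le> std_normal_density y - sq2pi / (sq2pi + 2 * y)^2"
proof -
  have p: "0 < sq2pi + 2 * y" using sq2pi_pos assms by auto
  have "y * y / 2 \<le> 2 * ln (sq2pi + 2 * y) - 2 * ln sq2pi" using assms by (simp add: kf_def)
  also have "\<dots> = ln (((sq2pi + 2 * y) / sq2pi)^2)"
    using p sq2pi_pos by (simp add: ln_div ln_realpow)
  finally have "exp (y * y / 2) \<le> ((sq2pi + 2 * y) / sq2pi)^2"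
    using p sq2pi_pos by (metis exp_le_cancel_iff exp_ln divide_pos_pos zero_less_power)
  then have "sq2pi^2 / (sq2pi + 2 * y)^2 \<le> exp (- (y * y) / 2)"
    using p sq2pi_pos by (simp add: exp_minus field_simps power_divide)
  then have "sq2pi^2 / (sq2pi + 2 * y)^2 / sq2pi \<le> exp (- (y * y) / 2) / sq2pi"
    using sq2pi_pos by (intro divide_right_mono) auto
  moreover have "sq2pi^2 / (sq2pi + 2 * y)^2 / sq2pi = sq2pi / (sq2pi + 2 * y)^2"
    using sq2pi_pos by (simp add: power2_eq_square)
  ultimately show ?thesis by (simp add: snd_eq)
qed

lemma kf_hf_neg:
  assumes "0 \<le> y" "kf y \<le> 0"
  shows "std_normal_density y - sq2pi / (sq2pi + 2 * y)^2 \<le> 0"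
proof -
  have p: "0 < sq2pi + 2 * y" using sq2pi_pos assms by auto
  have "y * y / 2 \<ge> 2 * ln (sq2pi + 2 * y) - 2 * ln sq2pi" using assms by (simp add: kf_def)
  moreover have "2 * ln (sq2pi + 2 * y) - 2 * ln sq2pi = ln (((sq2pi + 2 * y) / sq2pi)^2)"
    using p sq2pi_pos by (simp add: ln_div ln_realpow)
  ultimately have "exp (y * y / 2) \<ge> ((sq2pi + 2 * y) / sq2pi)^2"
    using p sq2pi_pos by (metis exp_le_cancel_iff exp_ln divide_pos_pos zero_less_power)
  then have "sq2pi^2 / (sq2pi + 2 * y)^2 \<ge> exp (- (y * y) / 2)"
    using p sq2pi_pos by (simp add: exp_minus field_simps power_divide)
  then have "sq2pi^2 / (sq2pi + 2 * y)^2 / sq2pi \<ge> exp (- (y * y) / 2) / sq2pi"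
    using sq2pi_pos by (intro divide_right_mono) auto
  moreover have "sq2pi^2 / (sq2pi + 2 * y)^2 / sq2pi = sq2pi / (sq2pi + 2 * y)^2"
    using sq2pi_pos by (simp add: power2_eq_square)
  ultimately show ?thesis by (simp add: snd_eq)
qed

lemma hf_lim: "(hf \<longlongrightarrow> 0) at_top"
proof -
  have "((\<lambda>y. y / (sq2pi + 2 * y)) \<longlongrightarrow> 1/2) at_top"
    unfolding sq2pi_def by real_asymp
  then have "((\<lambda>y. Phi y - 1/2 - y / (sq2pi + 2 * y)) \<longlongrightarrow> 1 - 1/2 - 1/2) at_top"
    by (intro tendsto_diff[OF tendsto_diff[OF Phi_top tendsto_const]])
  then show ?thesis by (simp add: hf_def[abs_def])
qed

lemma hf_nonneg:
  assumes "0 \<le> x" shows "0 \<le> hf x"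
proof (rule ccontr)
  assume neg: "\<not> 0 \<le> hf x"
  have h0: "hf 0 = 0" by (simp add: hf_def Phi_0)
  show False
  proof (cases "0 \<le> kf x")
    case True
    have "\<forall>y. 0 \<le> y \<and> y \<le> x \<longrightarrow> 0 \<le> kf y"
    proof (intro allI impI)
      fix y assume y: "0 \<le> y \<and> y \<le> x"
      show "0 \<le> kf y"
      proof (rule ccontr)
        assume "\<not> 0 \<le> kf y"
        then have "y \<noteq> 0" "y \<noteq> x" using True kf_0 by auto
        then have "kf x < kf y" using y \<open>\<not> 0 \<le> kf y\<close> by (intro kf_mono) auto
        then show False using True \<open>\<not> 0 \<le> kf y\<close> by linarith
      qed
    qed
    then have "hf 0 \<le> hf x"
    proof (intro DERIV_nonneg_imp_nondecreasing[OF assms])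
      fix y assume k: "\<forall>y. 0 \<le> y \<and> y \<le> x \<longrightarrow> 0 \<le> kf y" and y: "0 \<le> y" "y \<le> x"
      then show "\<exists>d. (hf has_real_derivative d) (at y) \<and> 0 \<le> d"
        using hf_deriv[OF y(1)] kf_hf_pos[OF y(1)] by blast
    qed
    then show False using neg h0 by simp
  next
    case False
    have "\<forall>y. x \<le> y \<longrightarrow> kf y \<le> 0"
    proof (intro allI impI)
      fix y assume "x \<le> y"
      show "kf y \<le> 0"
      proof (cases "y = x")
        case True then show ?thesis using False by simp
      next
        case F2: False
        have "x \<noteq> 0" using False kf_0 by auto
        then have "kf y < kf x" using F2 \<open>x \<le> y\<close> assms False by (intro kf_mono) auto
        then show ?thesis using False by simp
      qed
    qed
    then have le: "\<forall>y. x \<le> y \<longrightarrow> hf y \<le> hf x"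
    proof (intro allI impI)
      fix y assume k: "\<forall>y. x \<le> y \<longrightarrow> kf y \<le> 0" and "x \<le> y"
      show "hf y \<le> hf x"
      proof (rule DERIV_nonpos_imp_nonincreasing[OF \<open>x \<le> y\<close>])
        fix z assume z: "x \<le> z" "z \<le> y"
        then have "0 \<le> z" using assms by simp
        then show "\<exists>d. (hf has_real_derivative d) (at z) \<and> d \<le> 0"
          using hf_deriv[of z] kf_hf_neg[of z] k z by blast
      qed
    qed
    have "0 \<le> hf x"
      by (rule tendsto_le[OF _ tendsto_const hf_lim]) (auto intro: eventually_at_top_linorderI[of x] simp: le)
    then show False using neg by simp
  qed
qed

lemma Phi_lower:
  assumes "0 \<le> x" shows "1/2 + x / (sq2pi + 2 * x) \<le> Phi x"
  using hf_nonneg[OF assms] by (simp add: hf_def)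

definition gf :: "real \<Rightarrow> real" where
  "gf z = Phi (- z) - z * std_normal_density z"

lemma Phi_neg_deriv: "((\<lambda>z. Phi (- z)) has_real_derivative (- std_normal_density z)) (at z)"
proof -
  have "((\<lambda>z. Phi (- z)) has_real_derivative std_normal_density (- z) * (- 1)) (at z)"
    by (rule DERIV_chain2[where f=Phi and g=uminus]) (auto intro!: Phi_deriv derivative_eq_intros)
  then show ?thesis by (simp add: snd_even)
qed

lemma ff_deriv: "((\<lambda>z. z * Phi (- z)) has_real_derivative gf z) (at z)"
  unfolding gf_def
  by (auto intro!: derivative_eq_intros Phi_neg_deriv simp: algebra_simps)

lemma gf_deriv: "(gf has_real_derivative ((z * z - 2) * std_normal_density z)) (at z)"
  unfolding gf_def[abs_def]
  by (auto intro!: derivative_eq_intros Phi_neg_deriv snd_deriv simp: algebra_simps)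

lemma gf_cont: "continuous_on S gf"
  by (intro continuous_at_imp_continuous_on ballI DERIV_isCont[OF gf_deriv])

lemma ff_cont: "continuous_on S (\<lambda>z. z * Phi (- z))"
  by (intro continuous_at_imp_continuous_on ballI DERIV_isCont[OF ff_deriv])

lemma gf_lim: "(gf \<longlongrightarrow> 0) at_top"
proof -
  have "((\<lambda>z. Phi (- z)) \<longlongrightarrow> 0) at_top"
    using filterlim_compose[OF std.cdf_lim_at_bot filterlim_uminus_at_bot_at_top]
    by (simp add: Phi_cdf)
  moreover have "((\<lambda>z. z * std_normal_density z) \<longlongrightarrow> 0) at_top"
    unfolding snd_eq sq2pi_def by real_asymp
  ultimately have "((\<lambda>z. Phi (- z) - z * std_normal_density z) \<longlongrightarrow> 0 - 0) at_top"
    by (rule tendsto_diff)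
  then show ?thesis by (simp add: gf_def[abs_def])
qed

lemma gf_neg_big:
  assumes "sqrt 2 < b" shows "gf b < 0"
proof -
  have d: "\<exists>y. ((\<lambda>z. - gf z) has_real_derivative y) (at x) \<and> y < 0" if bx: "b \<le> x" for x
  proof -
    have s: "sqrt 2 < x" using assms bx by simp
    have "0 < sqrt (2::real)" by simp
    with s have x0: "0 < x" by linarith
    have "sqrt 2 * sqrt 2 < x * x"
      using mult_strict_mono[OF s s x0] by simp
    then have "2 < x * x" by simp
    then have "(- ((x * x - 2) * std_normal_density x)) < 0"
      using snd_pos[of x] by simp
    then show ?thesis
      using DERIV_minus[OF gf_deriv[of x]] by blast
  qed
  have "0 < (\<lambda>z. - gf z) b"
    by (rule DERIV_neg_imp_decreasing_at_top[OF d]) (use tendsto_minus[OF gf_lim] in simp_all)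
  then show ?thesis by simp
qed

lemma gf_neg:
  assumes "sqrt 2 \<le> b" shows "gf b < 0"
proof -
  have d: "\<exists>y. (gf has_real_derivative y) (at x) \<and> 0 \<le> y" if bx: "b \<le> x" for x
  proof -
    have s: "sqrt 2 \<le> x" using assms bx by simp
    have "0 < sqrt (2::real)" by simp
    with s have x0: "0 \<le> x" by linarith
    have "sqrt 2 * sqrt 2 \<le> x * x"
      using mult_mono[OF s s x0] by simp
    then have "2 \<le> x * x" by simp
    then have "0 \<le> (x * x - 2) * std_normal_density x"
      using snd_pos[of x] by simp
    then show ?thesis
      using gf_deriv[of x] by blast
  qed
  have "gf b \<le> gf (b + 1)"
    by (rule DERIV_nonneg_imp_nondecreasing) (use d in auto)
  also have "\<dots> < 0" using assms by (intro gf_neg_big) simp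
  finally show ?thesis .
qed

lemma gf_decr:
  assumes "0 \<le> a" "a < b" "b \<le> sqrt 2" shows "gf b < gf a"
proof (rule DERIV_neg_imp_decreasing_open[OF assms(2) _ gf_cont])
  fix x assume x: "a < x" "x < b"
  then have "x < sqrt 2" "0 < x" using assms by auto
  then have "x * x < sqrt 2 * sqrt 2"
    by (intro mult_strict_mono) auto
  then have "x * x < 2" by simp
  then have "(x * x - 2) * std_normal_density x < 0"
    using snd_pos[of x] by (simp add: mult_neg_pos)
  then show "\<exists>y. (gf has_real_derivative y) (at x) \<and> y < 0"
    using gf_deriv[of x] by blast
qed

lemma gf_0: "gf 0 = 1/2" by (simp add: gf_def Phi_0)

lemma B_exists_unique:
  "\<exists>zs. 0 \<le> zs \<and> (\<forall>y\<ge>0. y * Phi (- y) \<le> zs * Phi (- zs)) \<and>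
        (\<forall>z. 0 \<le> z \<and> (\<forall>y\<ge>0. y * Phi (- y) \<le> z * Phi (- z)) \<longrightarrow> z = zs)"
proof -
  have "gf (sqrt 2) \<le> 0" using gf_neg[of "sqrt 2"] by simp
  then obtain zs where zs: "0 \<le> zs" "zs \<le> sqrt 2" "gf zs = 0"
    using IVT2'[of gf "sqrt 2" 0 0] gf_0 gf_cont by auto
  have pos: "0 < gf z" if "0 \<le> z" "z < zs" for z
    using gf_decr[of z zs] that zs by auto
  have neg: "gf z < 0" if "zs < z" for z
  proof (cases "z \<le> sqrt 2")
    case True then show ?thesis using gf_decr[of zs z] that zs by auto
  next
    case False then show ?thesis using gf_neg[of z] by simp
  qed
  let ?f = "\<lambda>z. z * Phi (- z)"
  have lt: "?f y < ?f zs" if "0 \<le> y" "y \<noteq> zs" for y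
  proof (cases "y < zs")
    case True
    show ?thesis
    proof (rule DERIV_pos_imp_increasing_open[OF True _ ff_cont])
      fix x assume "y < x" "x < zs"
      then show "\<exists>d. (?f has_real_derivative d) (at x) \<and> 0 < d"
        using ff_deriv[of x] pos[of x] that by auto
    qed
  next
    case False
    then have "zs < y" using that by simp
    show ?thesis
    proof (rule DERIV_neg_imp_decreasing_open[OF \<open>zs < y\<close> _ ff_cont])
      fix x assume "zs < x" "x < y"
      then show "\<exists>d. (?f has_real_derivative d) (at x) \<and> d < 0"
        using ff_deriv[of x] neg[of x] by auto
    qed
  qed
  show ?thesis
  proof (intro exI conjI allI impI)
    show "0 \<le> zs" by fact
    fix y :: real assume "0 \<le> y" then show "?f y \<le> ?f zs"
      using lt[of y] by (cases "y = zs") auto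
  next
    fix z assume z: "0 \<le> z \<and> (\<forall>y\<ge>0. ?f y \<le> ?f z)"
    show "z = zs"
    proof (rule ccontr)
      assume "z \<noteq> zs"
      then have "?f z < ?f zs" using lt[of z] z by blast
      moreover have "?f zs \<le> ?f z" using z zs(1) by blast
      ultimately show False by linarith
    qed
  qed
qed

lemma B_prop: "0 \<le> B_const \<and> (\<forall>y\<ge>0. y * Phi (- y) \<le> B_const * Phi (- B_const))"
proof -
  obtain zs where zs: "0 \<le> zs" "\<forall>y\<ge>0. y * Phi (- y) \<le> zs * Phi (- zs)"
     "\<And>z. 0 \<le> z \<and> (\<forall>y\<ge>0. y * Phi (- y) \<le> z * Phi (- z)) \<Longrightarrow> z = zs"
    using B_exists_unique by blast
  have "B_const = zs"
    unfolding B_const_def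
  proof (rule the_equality)
    show "0 \<le> zs \<and> (\<forall>y\<ge>0. y * Phi (- y) \<le> zs * Phi (- zs))" using zs(1,2) by blast
  next
    fix z assume "0 \<le> z \<and> (\<forall>y\<ge>0. y * Phi (- y) \<le> z * Phi (- z))"
    then show "z = zs" by (rule zs(3))
  qed
  then show ?thesis using zs(1,2) by simp
qed

lemma B_bound:
  assumes "0 < s"
  shows "a * ((if 0 \<le> a then 1 else 0) - Phi (a / s)) \<le> s * B_const"
proof -
  have B: "0 \<le> B_const" "\<And>y. 0 \<le> y \<Longrightarrow> y * Phi (- y) \<le> B_const * Phi (- B_const)"
    using B_prop by auto
  have "B_const * Phi (- B_const) \<le> B_const"
    using B(1) Phi_le1[of "- B_const"] by (simp add: mult_left_le)
  then have key: "\<bar>a\<bar> / s * Phi (- (\<bar>a\<bar> / s)) \<le> B_const"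
    using B(2)[of "\<bar>a\<bar> / s"] assms by simp
  have "a * ((if 0 \<le> a then 1 else 0) - Phi (a / s)) = s * (\<bar>a\<bar> / s * Phi (- (\<bar>a\<bar> / s)))"
  proof (cases "0 \<le> a")
    case True
    have "Phi (- (a / s)) = 1 - Phi (a / s)" by (rule Phi_neg)
    then show ?thesis using True assms by simp
  next
    case False
    have "- (\<bar>a\<bar> / s) = a / s" using False by simp
    then show ?thesis using False assms by simp
  qed
  also have "\<dots> \<le> s * B_const"
    using key assms by (intro mult_left_mono) auto
  finally show ?thesis .
qed

lemma NM_le_less: "0 < \<sigma> \<Longrightarrow> measure (NM \<mu> \<sigma>) {..<t} = Phi ((t - \<mu>) / \<sigma>)"
proof -
  assume s: "0 < \<sigma>"
  interpret P: prob_space "NM \<mu> \<sigma>" using NM_prob[OF s] .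
  have "measure (NM \<mu> \<sigma>) {..t} = measure (NM \<mu> \<sigma>) ({..<t} \<union> {t})"
    by (auto intro!: arg_cong2[where f=measure])
  also have "\<dots> = measure (NM \<mu> \<sigma>) {..<t} + measure (NM \<mu> \<sigma>) {t}"
    by (intro P.finite_measure_Union) auto
  finally show ?thesis using Phi_NM[OF s] by (simp add: NM_singleton)
qed

lemma NM_upper: "0 < \<sigma> \<Longrightarrow> measure (NM \<mu> \<sigma>) {t..} = Phi ((\<mu> - t) / \<sigma>)"
proof -
  assume s: "0 < \<sigma>"
  interpret P: prob_space "NM \<mu> \<sigma>" using NM_prob[OF s] .
  have "measure (NM \<mu> \<sigma>) {t..} = measure (NM \<mu> \<sigma>) (space (NM \<mu> \<sigma>) - {..<t})"
    by (auto intro!: arg_cong2[where f=measure])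
  also have "\<dots> = 1 - measure (NM \<mu> \<sigma>) {..<t}"
    by (rule P.prob_compl) auto
  also have "\<dots> = 1 - Phi ((t - \<mu>) / \<sigma>)" using NM_le_less[OF s] by simp
  also have "\<dots> = Phi (- ((t - \<mu>) / \<sigma>))" by (simp add: Phi_neg)
  finally show ?thesis by (simp add: minus_divide_left)
qed

lemma NM_sign: "0 < \<sigma> \<Longrightarrow> (\<integral>y. (if 0 \<le> y then 1 else 0) \<partial>NM \<mu> \<sigma>) = Phi (\<mu> / \<sigma>)"
proof -
  assume s: "0 < \<sigma>"
  interpret P: prob_space "NM \<mu> \<sigma>" using NM_prob[OF s] .
  have "(\<integral>y. (if 0 \<le> y then 1 else 0) \<partial>NM \<mu> \<sigma>) = (\<integral>y. indicator {0..} y \<partial>NM \<mu> \<sigma>)"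
    by (intro Bochner_Integration.integral_cong) (auto simp: indicator_def)
  also have "\<dots> = measure (NM \<mu> \<sigma>) {0..}"
    by (simp add: Bochner_Integration.integral_indicator)
  finally show ?thesis using NM_upper[OF s, of \<mu> 0] by simp
qed

lemma Phi_borel[measurable]: "Phi \<in> borel_measurable borel"
  by (rule borel_measurable_continuous_onI[OF Phi_cont])

lemma NM_conv:
  assumes s: "0 < \<sigma>" and w: "0 < w"
  shows "NM \<mu> \<sigma> \<star> NM 0 w = NM \<mu> (sqrt (\<sigma>\<^sup>2 + w\<^sup>2))"
proof -
  interpret P: prob_space "NM \<mu> \<sigma>" using NM_prob[OF s] .
  interpret Q: prob_space "NM 0 w" using NM_prob[OF w] .
  have "NM \<mu> \<sigma> \<star> NM 0 w = density lborel (\<lambda>x. \<integral>\<^sup>+y. ennreal (normal_density \<mu> \<sigma> (x - y)) * ennreal (normal_density 0 w y) \<partial>lborel)"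
    by (rule convolution_density) (auto intro: P.finite_measure Q.finite_measure)
  also have "(\<lambda>x. \<integral>\<^sup>+y. ennreal (normal_density \<mu> \<sigma> (x - y)) * ennreal (normal_density 0 w y) \<partial>lborel)
     = (\<lambda>x. ennreal (normal_density \<mu> (sqrt (\<sigma>\<^sup>2 + w\<^sup>2)) x))"
  proof
    fix x
    have "(\<integral>\<^sup>+y. ennreal (normal_density \<mu> \<sigma> (x - y)) * ennreal (normal_density 0 w y) \<partial>lborel)
       = (\<integral>\<^sup>+y. ennreal (normal_density 0 \<sigma> ((x - \<mu>) - y) * normal_density 0 w y) \<partial>lborel)"
    proof (intro nn_integral_cong)
      fix y
      have "normal_density \<mu> \<sigma> (x - y) = normal_density 0 \<sigma> ((x - \<mu>) - y)"
        by (simp add: normal_density_def algebra_simps)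
      then show "ennreal (normal_density \<mu> \<sigma> (x - y)) * ennreal (normal_density 0 w y)
           = ennreal (normal_density 0 \<sigma> ((x - \<mu>) - y) * normal_density 0 w y)"
        by (simp add: ennreal_mult)
    qed
    also have "\<dots> = normal_density 0 (sqrt (\<sigma>\<^sup>2 + w\<^sup>2)) (x - \<mu>)"
      using fun_cong[OF conv_normal_density_zero_mean[OF s w], of "x - \<mu>"] by simp
    also have "\<dots> = normal_density \<mu> (sqrt (\<sigma>\<^sup>2 + w\<^sup>2)) x"
      by (simp add: normal_density_def)
    finally show "(\<integral>\<^sup>+y. ennreal (normal_density \<mu> \<sigma> (x - y)) * ennreal (normal_density 0 w y) \<partial>lborel)
       = ennreal (normal_density \<mu> (sqrt (\<sigma>\<^sup>2 + w\<^sup>2)) x)" .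
  qed
  finally show ?thesis .
qed

lemma NM_Phi_smooth:
  assumes s: "0 < \<sigma>" and w: "0 < w"
  shows "(\<integral>y. Phi (y / w) \<partial>NM \<mu> \<sigma>) = Phi (\<mu> / sqrt (\<sigma>\<^sup>2 + w\<^sup>2))"
proof -
  interpret P: prob_space "NM \<mu> \<sigma>" using NM_prob[OF s] .
  interpret Q: prob_space "NM 0 w" using NM_prob[OF w] .
  have r: "0 < sqrt (\<sigma>\<^sup>2 + w\<^sup>2)" using s by (simp add: add_pos_nonneg)
  interpret R: prob_space "NM \<mu> (sqrt (\<sigma>\<^sup>2 + w\<^sup>2))" using NM_prob[OF r] .
  have "emeasure (NM \<mu> \<sigma> \<star> NM 0 w) {0..} = (\<integral>\<^sup>+x. emeasure (NM 0 w) {a. a + x \<in> {0..}} \<partial>NM \<mu> \<sigma>)"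
    by (rule convolution_emeasure) (auto intro: P.finite_measure Q.finite_measure)
  also have "\<dots> = (\<integral>\<^sup>+x. ennreal (Phi (x / w)) \<partial>NM \<mu> \<sigma>)"
  proof (intro nn_integral_cong)
    fix x :: real
    have "{a. a + x \<in> {0..}} = {-x..}" by (auto; linarith)
    then show "emeasure (NM 0 w) {a. a + x \<in> {0..}} = ennreal (Phi (x / w))"
      using NM_upper[OF w, of 0 "-x"] by (simp add: Q.emeasure_eq_measure)
  qed
  finally have "(\<integral>\<^sup>+x. ennreal (Phi (x / w)) \<partial>NM \<mu> \<sigma>) = ennreal (Phi (\<mu> / sqrt (\<sigma>\<^sup>2 + w\<^sup>2)))"
    using NM_upper[OF r, of \<mu> 0] by (simp add: NM_conv[OF s w] R.emeasure_eq_measure)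
  moreover have "(\<integral>y. Phi (y / w) \<partial>NM \<mu> \<sigma>) = enn2real (\<integral>\<^sup>+x. ennreal (Phi (x / w)) \<partial>NM \<mu> \<sigma>)"
    by (rule integral_eq_nn_integral) (auto simp: Phi_nonneg)
  ultimately show ?thesis using Phi_nonneg by simp
qed

lemma gauss_marg:
  assumes fin: "finite Sc" and j: "j \<in> Sc" and sd: "\<forall>i\<in>Sc. 0 < sd i"
    and g[measurable]: "(g :: real \<Rightarrow> real) \<in> borel_measurable borel"
  shows "(\<integral>u. g (u j) \<partial>gauss_vec Sc mu sd) = (\<integral>y. g y \<partial>NM (mu j) (sd j))"
proof -
  have "distr (gauss_vec Sc mu sd) (NM (mu j) (sd j)) (\<lambda>\<omega>. \<omega> j) = NM (mu j) (sd j)"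
    unfolding gauss_vec_def using sd j by (intro distr_PiM_component NM_prob) auto
  then have "(\<integral>y. g y \<partial>NM (mu j) (sd j)) = (\<integral>y. g y \<partial>distr (gauss_vec Sc mu sd) (NM (mu j) (sd j)) (\<lambda>\<omega>. \<omega> j))"
    by simp
  also have "\<dots> = (\<integral>u. g (u j) \<partial>gauss_vec Sc mu sd)"
    unfolding gauss_vec_def
  proof (rule integral_distr[of "\<lambda>\<omega>. \<omega> j" _ _ g])
    show "(\<lambda>\<omega>. \<omega> j) \<in> Pi\<^sub>M Sc (\<lambda>s. NM (mu s) (sd s)) \<rightarrow>\<^sub>M NM (mu j) (sd j)"
      using measurable_component_singleton[OF j, of "\<lambda>s. NM (mu s) (sd s)"] by simp
    show "g \<in> borel_measurable (NM (mu j) (sd j))"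
      using g by (simp add: measurable_cong_sets[OF sets_NM refl])
  qed
  finally show ?thesis by simp
qed

lemma Phi_band:
  assumes L: "0 < L" and u: "0 \<le> u"
  shows "1/2 + u / (2 * (L + u)) \<le> Phi (u / (2 * L / sq2pi))"
    and "Phi (u / (2 * L / sq2pi)) \<le> 1/2 + u / (2 * L)"
proof -
  have x: "u / (2 * L / sq2pi) = u * sq2pi / (2 * L)" using L sq2pi_pos by simp
  have x0: "0 \<le> u * sq2pi / (2 * L)" using L u sq2pi_pos by simp
  have Lu: "0 < L + u" using L u by simp
  have e1: "(u * sq2pi / (2 * L)) / (sq2pi + 2 * (u * sq2pi / (2 * L))) = u / (2 * (L + u))"
  proof -
    have d: "0 < sq2pi * (L * 2) + sq2pi * (u * 2)" using L u sq2pi_pos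
      by (simp add: add_pos_nonneg)
    then show ?thesis using L Lu sq2pi_pos by (simp add: field_simps)
  qed
  have e2: "(u * sq2pi / (2 * L)) / sq2pi = u / (2 * L)"
    using L u sq2pi_pos by (simp add: field_simps)
  show "1/2 + u / (2 * (L + u)) \<le> Phi (u / (2 * L / sq2pi))"
    using Phi_lower[OF x0] unfolding x e1 .
  show "Phi (u / (2 * L / sq2pi)) \<le> 1/2 + u / (2 * L)"
    using Phi_upper[OF x0] unfolding x e2 .
qed

lemma term_bound:
  assumes L: "0 < L" and at: "\<bar>a - t\<bar> \<le> L"
  shows "a * ((if 0 \<le> a then 1 else 0) - Phi (t / (2 * L / sq2pi))) \<le> L / 2"
proof -
  define r where "r = 2 * L / sq2pi"
  define u where "u = \<bar>t\<bar>"
  have u0: "0 \<le> u" by (simp add: u_def)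
  note band = Phi_band[OF L u0, folded r_def]
  have p: "Phi (t / r) = (if 0 \<le> t then Phi (u / r) else 1 - Phi (u / r))"
  proof (cases "0 \<le> t")
    case False
    then have "t / r = - (u / r)" by (simp add: u_def)
    then show ?thesis using False Phi_neg[of "u / r"] by simp
  qed (simp add: u_def)
  have P0: "0 \<le> Phi (u / r)" "Phi (u / r) \<le> 1" by (rule Phi_nonneg, rule Phi_le1)
  have id1: "(L + u) * (1/2 - u / (2 * (L + u))) = L / 2"
    using L u0 by (simp add: field_simps)
  have id2: "(L - u) * (1/2 + u / (2 * L)) \<le> L / 2"
  proof -
    have "(L - u) * (1/2 + u / (2 * L)) = L / 2 - u * u / (2 * L)"
      using L by (simp add: field_simps)
    moreover have "0 \<le> u * u / (2 * L)" using L by simp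
    ultimately show ?thesis by linarith
  qed
  have main: "a * ((if 0 \<le> a then 1 else 0) - Phi (t / r)) \<le> L / 2"
  proof (cases "0 \<le> a")
    case A: True
    show ?thesis
    proof (cases "0 \<le> t")
      case T: True
      then have ut: "u = t" by (simp add: u_def)
      have lhs: "a * ((if 0 \<le> a then 1 else 0) - Phi (t / r)) = a * (1 - Phi (u / r))"
        using A T p by simp
      have "a * (1 - Phi (u / r)) \<le> (L + u) * (1/2 - u / (2 * (L + u)))"
        using at A T band(1) P0 ut by (intro mult_mono) auto
      then show ?thesis using lhs id1 by linarith
    next
      case T: False
      then have ut: "u = - t" by (simp add: u_def)
      have lhs: "a * ((if 0 \<le> a then 1 else 0) - Phi (t / r)) = a * Phi (u / r)"
        using A T p by simp
      have "a * Phi (u / r) \<le> (L - u) * (1/2 + u / (2 * L))"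
        using at A T band(2) P0 ut by (intro mult_mono) auto
      then show ?thesis using lhs id2 by linarith
    qed
  next
    case A: False
    show ?thesis
    proof (cases "0 \<le> t")
      case T: True
      then have ut: "u = t" by (simp add: u_def)
      have lhs: "a * ((if 0 \<le> a then 1 else 0) - Phi (t / r)) = (- a) * Phi (u / r)"
        using A T p by simp
      have "(- a) * Phi (u / r) \<le> (L - u) * (1/2 + u / (2 * L))"
        using at A T band(2) P0 ut by (intro mult_mono) auto
      then show ?thesis using lhs id2 by linarith
    next
      case T: False
      then have ut: "u = - t" by (simp add: u_def)
      have lhs: "a * ((if 0 \<le> a then 1 else 0) - Phi (t / r)) = (- a) * (1 - Phi (u / r))"
      proof -
        have e: "Phi (t / r) = 1 - Phi (u / r)" using T p by simp
        show ?thesis unfolding e using A by (simp add: algebra_simps)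
      qed
      have "(- a) * (1 - Phi (u / r)) \<le> (L + u) * (1/2 - u / (2 * (L + u)))"
        using at A T band(1) P0 ut by (intro mult_mono) auto
      then show ?thesis using lhs id1 by linarith
    qed
  qed
  then show ?thesis unfolding r_def .
qed

lemma nn_prop:
  assumes "finite Sc" "Sc \<noteq> {}"
  shows "nn X Sc s \<in> Sc \<and> (\<forall>i\<in>Sc. norm (X s - X (nn X Sc s)) \<le> norm (X s - X i))"
proof -
  let ?f = "\<lambda>i. norm (X s - X i)"
  have "Min (?f ` Sc) \<in> ?f ` Sc" using assms by (intro Min_in) auto
  then obtain j0 where j0: "j0 \<in> Sc" "?f j0 = Min (?f ` Sc)" by auto
  have "\<forall>i\<in>Sc. ?f j0 \<le> ?f i" using assms j0 by (auto intro: Min_le)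
  then have ex: "\<exists>j. j \<in> Sc \<and> (\<forall>i\<in>Sc. ?f j \<le> ?f i)" using j0 by blast
  show ?thesis unfolding nn_def by (rule LeastI_ex[OF ex])
qed

lemma Lip_bound: "\<tau> \<in> Lip C \<Longrightarrow> \<bar>\<tau> x - \<tau> x'\<bar> \<le> C * norm (x - x')"
  by (simp add: Lip_def)

lemma main_fixed:
  fixes S :: nat and SE SP :: "nat set" and X :: "nat \<Rightarrow> 'a::euclidean_space"
    and \<sigma> :: "nat \<Rightarrow> real" and Sc :: "nat set"
  assumes SE_sub: "SE \<subseteq> {1..S}"
    and SP_sub: "SP \<subseteq> {1..S}" and SP_ne: "SP \<noteq> {}"
    and sigma_pos: "\<forall>s\<in>{1..S}. \<sigma> s > 0"
    and A2: "inj_on X {1..S}"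
    and Sc: "Sc \<subseteq> SE" "Sc \<noteq> {}"
  shows "\<exists>C0. \<forall>C>C0.
      (INF T\<in>half_rules SP Sc. SUP \<tau>\<in>Lip C. ereal (regret SP X \<sigma> T Sc \<tau>))
      \<le> ereal (B_const / real (card SP) * (\<Sum>s\<in>Sc \<inter> SP. \<sigma> s)
          + C / 2 * (1 / real (card SP)) * (\<Sum>s\<in>SP - Sc. norm (X s - X (nn X Sc s))))"
proof -
  have Sc_sub: "Sc \<subseteq> {1..S}" using Sc SE_sub by auto
  have finSc: "finite Sc" using Sc_sub finite_subset by blast
  have finSP: "finite SP" using SP_sub finite_subset by blast
  define j where "j s = nn X Sc s" for s
  have jSc: "j s \<in> Sc" for s using nn_prop[OF finSc Sc(2), of X s] unfolding j_def by blast
  define d where "d s = norm (X s - X (j s))" for s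
  have dpos: "0 < d s" if "s \<in> SP - Sc" for s
  proof -
    have "s \<noteq> j s" using that jSc[of s] by auto
    moreover have "s \<in> {1..S}" "j s \<in> {1..S}" using that SP_sub jSc[of s] Sc_sub by auto
    ultimately have "X s \<noteq> X (j s)" using inj_onD[OF A2, of s "j s"] by blast
    then show ?thesis by (simp add: d_def)
  qed
  have sig: "0 < \<sigma> i" if "i \<in> Sc" for i using sigma_pos Sc_sub that by auto
  define C0 where "C0 = (\<Sum>s\<in>SP - Sc. \<sigma> (j s) * sq2pi / (2 * d s))"
  have termnn: "0 \<le> \<sigma> (j s) * sq2pi / (2 * d s)" if "s \<in> SP - Sc" for s
    using sig[OF jSc[of s]] dpos[OF that] sq2pi_pos by simp
  have C0nn: "0 \<le> C0" unfolding C0_def by (intro sum_nonneg termnn)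
  show ?thesis
  proof (intro exI allI impI)
    fix C :: real assume C: "C0 < C"
    have Cpos: "0 < C" using C C0nn by simp
    define L where "L s = C * d s" for s
    define r where "r s = 2 * L s / sq2pi" for s
    define w where "w s = sqrt ((r s)\<^sup>2 - (\<sigma> (j s))\<^sup>2)" for s
    have sig_r: "\<sigma> (j s) < r s" if "s \<in> SP - Sc" for s
    proof -
      have "\<sigma> (j s) * sq2pi / (2 * d s) \<le> C0"
        unfolding C0_def using finSP that by (intro member_le_sum termnn) auto
      then have "\<sigma> (j s) * sq2pi / (2 * d s) < C" using C by simp
      then show ?thesis using dpos[OF that] sq2pi_pos
        by (simp add: r_def L_def field_simps)
    qed
    have wpos: "0 < w s" if "s \<in> SP - Sc" for s
    proof -
      have "0 < \<sigma> (j s)" using sig[OF jSc[of s]] .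
      then have "(\<sigma> (j s))\<^sup>2 < (r s)\<^sup>2" using sig_r[OF that] by (intro power_strict_mono) auto
      then show ?thesis by (simp add: w_def)
    qed
    have rw: "sqrt ((\<sigma> (j s))\<^sup>2 + (w s)\<^sup>2) = r s" if "s \<in> SP - Sc" for s
    proof -
      have "0 < \<sigma> (j s)" using sig[OF jSc[of s]] .
      then have "(\<sigma> (j s))\<^sup>2 < (r s)\<^sup>2" using sig_r[OF that] by (intro power_strict_mono) auto
      moreover have "0 \<le> r s" using sig_r[OF that] \<open>0 < \<sigma> (j s)\<close> by simp
      ultimately show ?thesis by (simp add: w_def)
    qed
    define T where "T = (\<lambda>u s. if s \<in> Sc then (if 0 \<le> u s then 1 else 0) else Phi (u (j s) / w s))"
    have int1: "(\<integral>u. T u s \<partial>gauss_vec Sc mu sd) = Phi (mu s / sd s)"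
      if sd: "\<forall>i\<in>Sc. 0 < sd i" and s: "s \<in> Sc" for mu sd s
    proof -
      have "(\<integral>u. T u s \<partial>gauss_vec Sc mu sd) = (\<integral>u. (\<lambda>y::real. if 0 \<le> y then 1 else 0::real) (u s) \<partial>gauss_vec Sc mu sd)"
        using s by (simp add: T_def)
      also have "\<dots> = (\<integral>y. (if 0 \<le> y then 1 else 0) \<partial>NM (mu s) (sd s))"
        by (rule gauss_marg[OF finSc s sd]) measurable
      also have "\<dots> = Phi (mu s / sd s)" using sd s by (intro NM_sign) auto
      finally show ?thesis .
    qed
    have int2: "(\<integral>u. T u s \<partial>gauss_vec Sc mu sd) = Phi (mu (j s) / sqrt ((sd (j s))\<^sup>2 + (w s)\<^sup>2))"
      if sd: "\<forall>i\<in>Sc. 0 < sd i" and s: "s \<in> SP - Sc" for mu sd s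
    proof -
      have "(\<integral>u. T u s \<partial>gauss_vec Sc mu sd) = (\<integral>u. (\<lambda>y. Phi (y / w s)) (u (j s)) \<partial>gauss_vec Sc mu sd)"
        using s by (simp add: T_def)
      also have "\<dots> = (\<integral>y. Phi (y / w s) \<partial>NM (mu (j s)) (sd (j s)))"
        by (rule gauss_marg[OF finSc jSc sd]) measurable
      also have "\<dots> = Phi (mu (j s) / sqrt ((sd (j s))\<^sup>2 + (w s)\<^sup>2))"
        using sd jSc[of s] wpos[OF s] by (intro NM_Phi_smooth) auto
      finally show ?thesis .
    qed
    have Thalf: "T \<in> half_rules SP Sc"
      unfolding half_rules_def
    proof (intro CollectI conjI ballI allI impI)
      fix s assume s: "s \<in> SP"
      show "(\<lambda>u. T u s) \<in> borel_measurable (Pi\<^sub>M Sc (\<lambda>_. borel))"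
      proof (cases "s \<in> Sc")
        case True
        have m: "(\<lambda>u. u s) \<in> borel_measurable (Pi\<^sub>M Sc (\<lambda>_. borel))"
          using measurable_component_singleton[OF True, of "\<lambda>_. borel"] by simp
        have eq: "(\<lambda>u. T u s) = (\<lambda>y::real. if 0 \<le> y then 1 else 0::real) \<circ> (\<lambda>u. u s)"
          using True by (auto simp: T_def)
        have mf: "(\<lambda>y::real. if 0 \<le> y then 1 else 0::real) \<in> borel_measurable borel" by measurable
        show ?thesis unfolding eq by (rule measurable_comp[OF m mf])
      next
        case False
        have m: "(\<lambda>u. u (j s)) \<in> borel_measurable (Pi\<^sub>M Sc (\<lambda>_. borel))"
          using measurable_component_singleton[OF jSc[of s], of "\<lambda>_. borel"] by simp
        have eq: "(\<lambda>u. T u s) = (\<lambda>y. Phi (y / w s)) \<circ> (\<lambda>u. u (j s))"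
          using False by (auto simp: T_def)
        have mf: "(\<lambda>y. Phi (y / w s)) \<in> borel_measurable borel" by measurable
        show ?thesis unfolding eq by (rule measurable_comp[OF m mf])
      qed
    next
      fix s u assume "s \<in> SP"
      show "0 \<le> T u s" by (simp add: T_def Phi_nonneg)
      show "T u s \<le> 1" by (simp add: T_def Phi_le1)
    next
      fix sd :: "nat \<Rightarrow> real" and s assume sd: "\<forall>i\<in>Sc. 0 < sd i" and s: "s \<in> SP"
      show "(\<integral>u. T u s \<partial>gauss_vec Sc (\<lambda>_. 0) sd) = 1/2"
      proof (cases "s \<in> Sc")
        case True then show ?thesis using int1[OF sd True, of "\<lambda>_. 0"] by (simp add: Phi_0)
      next
        case False then show ?thesis using int2[OF sd, of s "\<lambda>_. 0"] s by (simp add: Phi_0)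
      qed
    qed
    let ?bound = "B_const / real (card SP) * (\<Sum>s\<in>Sc \<inter> SP. \<sigma> s)
          + C / 2 * (1 / real (card SP)) * (\<Sum>s\<in>SP - Sc. norm (X s - X (nn X Sc s)))"
    have Tbound: "regret SP X \<sigma> T Sc \<tau> \<le> ?bound" if tau: "\<tau> \<in> Lip C" for \<tau>
    proof -
      define G where "G = gauss_vec Sc (\<lambda>i. \<tau> (X i)) \<sigma>"
      define tm where "tm s = \<tau> (X s) * ((if \<tau> (X s) \<ge> 0 then 1 else 0) - (\<integral>u. T u s \<partial>G))" for s
      have sdpos: "\<forall>i\<in>Sc. 0 < \<sigma> i" using sig by blast
      have b1: "tm s \<le> \<sigma> s * B_const" if s: "s \<in> SP \<inter> Sc" for s
      proof -
        have "(\<integral>u. T u s \<partial>G) = Phi (\<tau> (X s) / \<sigma> s)"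
          unfolding G_def using int1[OF sdpos, of s] s by simp
        then show ?thesis unfolding tm_def using B_bound[of "\<sigma> s" "\<tau> (X s)"] sig[of s] s by simp
      qed
      have b2: "tm s \<le> C * d s / 2" if s: "s \<in> SP - Sc" for s
      proof -
        have "(\<integral>u. T u s \<partial>G) = Phi (\<tau> (X (j s)) / (2 * L s / sq2pi))"
          unfolding G_def using int2[OF sdpos s] rw[OF s] by (simp add: r_def)
        moreover have "\<bar>\<tau> (X s) - \<tau> (X (j s))\<bar> \<le> L s"
          using Lip_bound[OF tau, of "X s" "X (j s)"] by (simp add: L_def d_def)
        moreover have "0 < L s" using Cpos dpos[OF s] by (simp add: L_def)
        ultimately show ?thesis unfolding tm_def
          using term_bound[of "L s" "\<tau> (X s)" "\<tau> (X (j s))"] by (simp add: L_def)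
      qed
      have "(\<Sum>s\<in>SP. tm s) = (\<Sum>s\<in>SP \<inter> Sc. tm s) + (\<Sum>s\<in>SP - Sc. tm s)"
        using finSP by (rule sum.Int_Diff)
      also have "\<dots> \<le> (\<Sum>s\<in>SP \<inter> Sc. \<sigma> s * B_const) + (\<Sum>s\<in>SP - Sc. C * d s / 2)"
        using b1 b2 by (intro add_mono sum_mono) auto
      also have "\<dots> = B_const * (\<Sum>s\<in>Sc \<inter> SP. \<sigma> s) + C / 2 * (\<Sum>s\<in>SP - Sc. norm (X s - X (nn X Sc s)))"
        by (simp add: sum_distrib_left sum_distrib_right sum_divide_distrib Int_commute d_def j_def mult.commute)
      finally have sumle: "(\<Sum>s\<in>SP. tm s) \<le> B_const * (\<Sum>s\<in>Sc \<inter> SP. \<sigma> s) + C / 2 * (\<Sum>s\<in>SP - Sc. norm (X s - X (nn X Sc s)))" .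
      have "regret SP X \<sigma> T Sc \<tau> = (1 / real (card SP)) * (\<Sum>s\<in>SP. tm s)"
        unfolding regret_def tm_def G_def ..
      also have "\<dots> \<le> (1 / real (card SP)) * (B_const * (\<Sum>s\<in>Sc \<inter> SP. \<sigma> s) + C / 2 * (\<Sum>s\<in>SP - Sc. norm (X s - X (nn X Sc s))))"
        using sumle by (intro mult_left_mono) auto
      also have "\<dots> = ?bound" by (simp add: algebra_simps)
      finally show ?thesis .
    qed
    have "(SUP \<tau>\<in>Lip C. ereal (regret SP X \<sigma> T Sc \<tau>)) \<le> ereal ?bound"
      using Tbound by (intro SUP_least) simp
    then show "(INF T\<in>half_rules SP Sc. SUP \<tau>\<in>Lip C. ereal (regret SP X \<sigma> T Sc \<tau>)) \<le> ereal ?bound"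
      using Thalf by (intro INF_lower2)
  qed
qed

theorem lemma1:
  fixes S :: nat and SE SP :: "nat set" and X :: "nat \<Rightarrow> 'a::euclidean_space"
    and \<sigma> :: "nat \<Rightarrow> real" and k :: nat
  assumes SE_sub: "SE \<subseteq> {1..S}" and SE_card: "card SE \<ge> 2"
    and SP_sub: "SP \<subseteq> {1..S}" and SP_ne: "SP \<noteq> {}"
    and sigma_pos: "\<forall>s\<in>{1..S}. \<sigma> s > 0"
    and A2: "inj_on X {1..S}"
    and k: "1 \<le> k" "k < card SE"
  shows "\<forall>Sc. Sc \<subseteq> SE \<and> card Sc \<le> k \<and> Sc \<noteq> {} \<longrightarrow>
    (\<exists>C0. \<forall>C>C0.
      (INF T\<in>half_rules SP Sc. SUP \<tau>\<in>Lip C. ereal (regret SP X \<sigma> T Sc \<tau>))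
      \<le> ereal (B_const / real (card SP) * (\<Sum>s\<in>Sc \<inter> SP. \<sigma> s)
          + C / 2 * (1 / real (card SP)) * (\<Sum>s\<in>SP - Sc. norm (X s - X (nn X Sc s)))))"
proof (intro allI impI)
  fix Sc assume Sc: "Sc \<subseteq> SE \<and> card Sc \<le> k \<and> Sc \<noteq> {}"
  show "\<exists>C0. \<forall>C>C0.
      (INF T\<in>half_rules SP Sc. SUP \<tau>\<in>Lip C. ereal (regret SP X \<sigma> T Sc \<tau>))
      \<le> ereal (B_const / real (card SP) * (\<Sum>s\<in>Sc \<inter> SP. \<sigma> s)
          + C / 2 * (1 / real (card SP)) * (\<Sum>s\<in>SP - Sc. norm (X s - X (nn X Sc s))))"
    by (rule main_fixed[OF SE_sub SP_sub SP_ne sigma_pos A2]) (use Sc in auto)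
qed

end
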